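(* If $h\in I$ satisfies $\beta(h)=b$ (i.e. $h$ solves WFP), then $(\theta_1,\dots,\theta_k)=(\theta_1(h),\dots,\theta_k(h))$ is a solution of CAP.
   Context: Let $s:[0,B]\to[0,\infty)$ satisfy $s(0)=0$, be strictly increasing, strictly concave, differentiable, with $s'$ continuous on $[0,B]$ (so $s'>0$ is strictly decreasing). Fix $b\in(0,B]$, an integer $k\ge2$, and constants $c_1\ge c_2\ge\cdots\ge c_k>0$. The Constrained Allocation Problem (CAP) is: find $\theta_1,\dots,\theta_k\ge0$ such that (i) $\theta_1+\cdots+\theta_k=b$; (ii) $\theta_1\le\theta_2\le\cdots\le\theta_k$; (iii) $s'(\theta_j)/s'(\theta_i)=c_j/c_i$ whenever $i<j$ and $\theta_j\ge\theta_i>0$; (iv) $s'(\theta_j)/s'(0)\ge c_j/c_i$ whenever $i<j$ and $\theta_j>\theta_i=0$. Let $s'^{(-1)}:[s'(b),s'(0)]\to[0,b]$ denote the inverse of $s'$ restricted to $[0,b]$. An auxiliary function is a continuous, strictly decreasing function $g:I\to\mathbb{R}$ on an interval $I\subseteq\mathbb{R}$ for which there exist $h_{lo}<h_{hi}$ in $I$ with $g(h_{hi})\le s'(b)/c_1$ and $g(h_{lo})\ge s'(0)/c_k$. For $i=1,\dots,k$ and $h\in I$ define $\theta_i(h)=0$ if $c_ig(h)\ge s'(0)$; $\theta_i(h)=s'^{(-1)}(c_ig(h))$ if $s'(b)<c_ig(h)<s'(0)$; and $\theta_i(h)=b$ if $c_ig(h)\le s'(b)$. Let $\beta(h)=\sum_{i=1}^k\theta_i(h)$.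 The Water-Filling Problem (WFP) is: find $h\in I$ with $\beta(h)=b$. *)

theory Defs
  imports "HOL-Analysis.Analysis"
begin

definition strict_concave_on :: "real set \<Rightarrow> (real \<Rightarrow> real) \<Rightarrow> bool" where
  "strict_concave_on S f \<longleftrightarrow>
     (\<forall>x\<in>S. \<forall>y\<in>S. \<forall>t::real. x \<noteq> y \<and> 0 < t \<and> t < 1 \<longrightarrow>
        f ((1 - t) * x + t * y) > (1 - t) * f x + t * f y)"

definition sinv :: "(real \<Rightarrow> real) \<Rightarrow> real \<Rightarrow> real \<Rightarrow> real" where
  "sinv s' b y = inv_into {0..b} s' y"

definition theta_h :: "(real \<Rightarrow> real) \<Rightarrow> real \<Rightarrow> (nat \<Rightarrow> real) \<Rightarrow> (real \<Rightarrow> real) \<Rightarrow> nat \<Rightarrow> real \<Rightarrow> real" where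
  "theta_h s' b c g i h =
     (if c i * g h \<ge> s' 0 then 0
      else if c i * g h \<le> s' b then b
      else sinv s' b (c i * g h))"

definition beta :: "(real \<Rightarrow> real) \<Rightarrow> real \<Rightarrow> nat \<Rightarrow> (nat \<Rightarrow> real) \<Rightarrow> (real \<Rightarrow> real) \<Rightarrow> real \<Rightarrow> real" where
  "beta s' b k c g h = (\<Sum>i=1..k. theta_h s' b c g i h)"

definition auxiliary_function :: "(real \<Rightarrow> real) \<Rightarrow> real \<Rightarrow> real \<Rightarrow> nat \<Rightarrow> (nat \<Rightarrow> real) \<Rightarrow> real set \<Rightarrow> (real \<Rightarrow> real) \<Rightarrow> bool" where
  "auxiliary_function s' B b k c I g \<longleftrightarrow>
     is_interval I \<and> continuous_on I g \<and>
     (\<forall>x\<in>I. \<forall>y\<in>I. x < y \<longrightarrow> g y < g x) \<and>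
     (\<exists>hlo\<in>I. \<exists>hhi\<in>I. hlo < hhi \<and> g hhi \<le> s' b / c 1 \<and> g hlo \<ge> s' 0 / c k)"

definition CAP_solution :: "(real \<Rightarrow> real) \<Rightarrow> real \<Rightarrow> nat \<Rightarrow> (nat \<Rightarrow> real) \<Rightarrow> (nat \<Rightarrow> real) \<Rightarrow> bool" where
  "CAP_solution s' b k c \<theta> \<longleftrightarrow>
     (\<forall>i\<in>{1..k}. \<theta> i \<ge> 0) \<and>
     (\<Sum>i=1..k. \<theta> i) = b \<and>
     (\<forall>i\<in>{1..k}. \<forall>j\<in>{1..k}. i \<le> j \<longrightarrow> \<theta> i \<le> \<theta> j) \<and>
     (\<forall>i\<in>{1..k}. \<forall>j\<in>{1..k}. i < j \<and> \<theta> j \<ge> \<theta> i \<and> \<theta> i > 0 \<longrightarrow>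
        s' (\<theta> j) / s' (\<theta> i) = c j / c i) \<and>
     (\<forall>i\<in>{1..k}. \<forall>j\<in>{1..k}. i < j \<and> \<theta> j > \<theta> i \<and> \<theta> i = 0 \<longrightarrow>
        s' (\<theta> j) / s' 0 \<ge> c j / c i)"

end

theory Submission imports Defs begin

lemma deriv_lb_right:
  fixes f :: "real \<Rightarrow> real"
  assumes d: "(f has_real_derivative D) (at c within S)" and cx: "c < x" and sub: "{c<..<x} \<subseteq> S"
    and lb: "\<And>y. c < y \<Longrightarrow> y < x \<Longrightarrow> L \<le> (f y - f c) / (y - c)"
  shows "L \<le> D"
proof -
  have t: "((\<lambda>y. (f y - f c) / (y - c)) \<longlongrightarrow> D) (at c within {c<..<x})"
    using d sub by (metis has_field_derivative_iff tendsto_within_subset)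
  have nt: "\<not> trivial_limit (at c within {c<..<x})"
    using islimpt_greaterThanLessThan1[OF cx] trivial_limit_within by blast
  have ev: "eventually (\<lambda>y. L \<le> (f y - f c) / (y - c)) (at c within {c<..<x})"
    unfolding eventually_at_filter using lb by (auto intro!: always_eventually)
  show ?thesis using tendsto_lowerbound[OF t ev nt] .
qed

lemma deriv_ub_left:
  fixes f :: "real \<Rightarrow> real"
  assumes d: "(f has_real_derivative D) (at c within S)" and cx: "x < c" and sub: "{x<..<c} \<subseteq> S"
    and ub: "\<And>y. x < y \<Longrightarrow> y < c \<Longrightarrow> (f y - f c) / (y - c) \<le> U"
  shows "D \<le> U"
proof -
  have t: "((\<lambda>y. (f y - f c) / (y - c)) \<longlongrightarrow> D) (at c within {x<..<c})"
    using d sub by (metis has_field_derivative_iff tendsto_within_subset)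
  have nt: "\<not> trivial_limit (at c within {x<..<c})"
    using islimpt_greaterThanLessThan2[OF cx] trivial_limit_within by blast
  have ev: "eventually (\<lambda>y. (f y - f c) / (y - c) \<le> U) (at c within {x<..<c})"
    unfolding eventually_at_filter using ub by (auto intro!: always_eventually)
  show ?thesis using tendsto_upperbound[OF t ev nt] .
qed

lemma conc_pt:
  assumes sc: "strict_concave_on {0..B} s" and c: "c \<in> {0..B}" and x: "x \<in> {0..B}"
    and t: "0 < t" "t < 1"
  shows "s c + t * (s x - s c) \<le> s (c + t * (x - c))"
proof (cases "x = c")
  case True then show ?thesis by simp
next
  case False
  then have "s ((1 - t) * c + t * x) > (1 - t) * s c + t * s x"
    using sc c x t unfolding strict_concave_on_def by (intro sc[unfolded strict_concave_on_def, rule_format]) auto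
  moreover have "(1 - t) * c + t * x = c + t * (x - c)" by algebra
  ultimately show ?thesis by (simp add: algebra_simps)
qed

lemma tangent:
  assumes sc: "strict_concave_on {0..B} s" and c: "c \<in> {0..B}" and x: "x \<in> {0..B}"
    and d: "(s has_real_derivative D) (at c within {0..B})"
  shows "s x - s c \<le> D * (x - c)"
proof -
  consider "x = c" | "c < x" | "x < c" by linarith
  then show ?thesis
  proof cases
    case 1 then show ?thesis by simp
  next
    case 2
    have "(s x - s c) / (x - c) \<le> D"
    proof (rule deriv_lb_right[OF d 2])
      show "{c<..<x} \<subseteq> {0..B}" using c x by auto
      fix y assume y: "c < y" "y < x"
      define t where "t = (y - c) / (x - c)"
      have t01: "0 < t" "t < 1" using y 2 by (auto simp: t_def field_simps)
      have yy: "y = c + t * (x - c)" using 2 by (simp add: t_def field_simps)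
      have "s c + t * (s x - s c) \<le> s y" using conc_pt[OF sc c x t01] yy by simp
      then have "t * (s x - s c) \<le> s y - s c" by simp
      then have "(y - c) * ((s x - s c) / (x - c)) \<le> s y - s c" by (simp add: t_def)
      then show "(s x - s c) / (x - c) \<le> (s y - s c) / (y - c)"
        using y by (simp add: field_simps)
    qed
    then show ?thesis using 2 by (simp add: field_simps)
  next
    case 3
    have "D \<le> (s x - s c) / (x - c)"
    proof (rule deriv_ub_left[OF d 3])
      show "{x<..<c} \<subseteq> {0..B}" using c x by auto
      fix y assume y: "x < y" "y < c"
      define t where "t = (y - c) / (x - c)"
      have t01: "0 < t" "t < 1" using y 3 by (auto simp: t_def field_simps)
      have yy: "y = c + t * (x - c)" using 3 by (simp add: t_def field_simps)
      have "s c + t * (s x - s c) \<le> s y" using conc_pt[OF sc c x t01] yy by simp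
      then have "t * (s x - s c) \<le> s y - s c" by simp
      then have "(y - c) * ((s x - s c) / (x - c)) \<le> s y - s c" by (simp add: t_def)
      then show "(s y - s c) / (y - c) \<le> (s x - s c) / (x - c)"
        using y by (simp add: field_simps)
    qed
    then show ?thesis using 3 by (simp add: field_simps)
  qed
qed

lemma deriv_strict_dec:
  assumes sc: "strict_concave_on {0..B} s"
    and d: "\<forall>x\<in>{0..B}. (s has_real_derivative s' x) (at x within {0..B})"
    and x: "x \<in> {0..B}" and y: "y \<in> {0..B}" and xy: "x < y"
  shows "s' y < s' x"
proof -
  define m where "m = (x + y) / 2"
  have m: "m \<in> {0..B}" using x y by (auto simp: m_def)
  have "\<forall>x\<in>{0..B}. \<forall>y\<in>{0..B}. \<forall>t::real. x \<noteq> y \<and> 0 < t \<and> t < 1 \<longrightarrow>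
        s ((1 - t) * x + t * y) > (1 - t) * s x + t * s y"
    using sc unfolding strict_concave_on_def by blast
  note scc = this
  have "s ((1 - 1/2) * x + (1/2) * y) > (1 - 1/2) * s x + (1/2) * s y"
    using x y xy by (intro scc[rule_format]) auto
  moreover have "(1 - 1/2) * x + (1/2) * y = m" by (simp add: m_def field_simps)
  ultimately have mid: "2 * s m > s x + s y" by simp
  have t1: "s m - s x \<le> s' x * (m - x)" by (rule tangent[OF sc x m]) (use d x in blast)
  have t2: "s m - s y \<le> s' y * (m - y)" by (rule tangent[OF sc y m]) (use d y in blast)
  have e1: "m - x = (y - x) / 2" and e2: "m - y = - ((y - x) / 2)" by (auto simp: m_def field_simps)
  have a: "s m - s x \<le> s' x * ((y - x) / 2)" using t1 e1 by simp
  have c: "s m - s y \<le> - (s' y * ((y - x) / 2))" using t2 e2 by simp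
  have "s' y * ((y - x) / 2) < s' x * ((y - x) / 2)" using a c mid by linarith
  then show ?thesis using xy by simp
qed

lemma deriv_lb_left:
  fixes f :: "real \<Rightarrow> real"
  assumes d: "(f has_real_derivative D) (at c within S)" and cx: "x < c" and sub: "{x<..<c} \<subseteq> S"
    and lb: "\<And>y. x < y \<Longrightarrow> y < c \<Longrightarrow> L \<le> (f y - f c) / (y - c)"
  shows "L \<le> D"
proof -
  have t: "((\<lambda>y. (f y - f c) / (y - c)) \<longlongrightarrow> D) (at c within {x<..<c})"
    using d sub by (metis has_field_derivative_iff tendsto_within_subset)
  have nt: "\<not> trivial_limit (at c within {x<..<c})"
    using islimpt_greaterThanLessThan2[OF cx] trivial_limit_within by blast
  have ev: "eventually (\<lambda>y. L \<le> (f y - f c) / (y - c)) (at c within {x<..<c})"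
    unfolding eventually_at_filter using lb by (auto intro!: always_eventually)
  show ?thesis using tendsto_lowerbound[OF t ev nt] .
qed

lemma deriv_nonneg_end:
  assumes sm: "strict_mono_on {0..B} s"
    and d: "(s has_real_derivative D) (at b within {0..B})" and b: "0 < b" "b \<le> B"
  shows "0 \<le> D"
proof (rule deriv_lb_left[OF d b(1)])
  show "{0<..<b} \<subseteq> {0..B}" using b by auto
  fix y assume y: "0 < y" "y < b"
  have "s y < s b" using sm y b by (auto simp: strict_mono_on_def)
  then show "0 \<le> (s y - s b) / (y - b)" using y by (simp add: divide_nonpos_neg)
qed

theorem proposition2:
  fixes s s' :: "real \<Rightarrow> real" and B b :: real and k :: nat
    and c :: "nat \<Rightarrow> real" and g :: "real \<Rightarrow> real" and I :: "real set" and h :: real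
  assumes s0: "s 0 = 0"
    and s_nonneg: "\<forall>x\<in>{0..B}. s x \<ge> 0"
    and s_mono: "strict_mono_on {0..B} s"
    and s_concave: "strict_concave_on {0..B} s"
    and s_deriv: "\<forall>x\<in>{0..B}. (s has_real_derivative s' x) (at x within {0..B})"
    and s'_cont: "continuous_on {0..B} s'"
    and b: "0 < b" "b \<le> B"
    and k: "k \<ge> 2"
    and c_mono: "\<forall>i\<in>{1..k}. \<forall>j\<in>{1..k}. i \<le> j \<longrightarrow> c j \<le> c i"
    and c_pos: "\<forall>i\<in>{1..k}. c i > 0"
    and aux: "auxiliary_function s' B b k c I g"
    and hI: "h \<in> I"
    and wfp: "beta s' b k c g h = b"
  shows "CAP_solution s' b k c (\<lambda>i. theta_h s' b c g i h)"
proof -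
  define G where "G = g h"
  define th where "th i = theta_h s' b c g i h" for i
  have bB: "b \<in> {0..B}" "0 \<in> {0..B}" using b by auto
  have sd: "\<And>x y. x \<in> {0..B} \<Longrightarrow> y \<in> {0..B} \<Longrightarrow> x < y \<Longrightarrow> s' y < s' x"
    by (rule deriv_strict_dec[OF s_concave s_deriv])
  have sb0: "0 \<le> s' b" by (rule deriv_nonneg_end[OF s_mono _ b]) (use s_deriv bB in blast)
  have s00: "s' b < s' 0" using sd bB b by auto
  have cont: "continuous_on {0..b} s'" by (rule continuous_on_subset[OF s'_cont]) (use b in auto)
  have inv: "sinv s' b y \<in> {0..b} \<and> s' (sinv s' b y) = y" if y: "s' b < y" "y < s' 0" for y
  proof -
    obtain x where "0 \<le> x" "x \<le> b" "s' x = y" using IVT2'[of s' b y 0, OF _ _ _ cont] y b by auto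
    then have "y \<in> s' ` {0..b}" by auto
    then show ?thesis unfolding sinv_def
      using inv_into_into[of y s' "{0..b}"] f_inv_into_f[of y s' "{0..b}"] by auto
  qed
  have th_range: "th i \<in> {0..b}" for i
    using inv[of "c i * G"] b by (auto simp: th_def theta_h_def G_def)
  have th_pos: "c i * G \<le> s' (th i)" if "0 < th i" for i
  proof -
    consider "c i * G \<ge> s' 0" | "\<not> c i * G \<ge> s' 0" "c i * G \<le> s' b" | "s' b < c i * G" "c i * G < s' 0" by linarith
    then show ?thesis
    proof cases
      case 1 then show ?thesis using that by (simp add: th_def theta_h_def G_def)
    next
      case 2 then show ?thesis using that by (simp add: th_def theta_h_def G_def)
    next
      case 3 then show ?thesis using inv[OF 3] by (simp add: th_def theta_h_def G_def)
    qed
  qed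
  have th_ltb: "s' (th i) \<le> c i * G" if "th i < b" for i
  proof -
    consider "c i * G \<ge> s' 0" | "\<not> c i * G \<ge> s' 0" "c i * G \<le> s' b" | "s' b < c i * G" "c i * G < s' 0" by linarith
    then show ?thesis
    proof cases
      case 1 then show ?thesis using that by (simp add: th_def theta_h_def G_def)
    next
      case 2 then show ?thesis using that by (simp add: th_def theta_h_def G_def)
    next
      case 3 then show ?thesis using inv[OF 3] by (simp add: th_def theta_h_def G_def)
    qed
  qed
  have sum: "(\<Sum>i=1..k. th i) = b" using wfp by (simp add: beta_def th_def)
  have Gpos: "0 < G"
  proof (rule ccontr)
    assume "\<not> 0 < G"
    then have "th i = b" if "i \<in> {1..k}" for i
    proof -
      have "c i * G \<le> 0" using c_pos that \<open>\<not> 0 < G\<close> by (simp add: mult_nonneg_nonpos less_imp_le)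
      then show ?thesis using sb0 s00 by (simp add: th_def theta_h_def G_def)
    qed
    then have "(\<Sum>i=1..k. th i) = real k * b" by simp
    moreover have "real k * b > 1 * b" using k b by (intro mult_strict_right_mono) auto
    ultimately show False using sum b k by simp
  qed
  have two: "th i + th j \<le> b" if "i \<in> {1..k}" "j \<in> {1..k}" "i \<noteq> j" for i j
  proof -
    have "(\<Sum>l\<in>{i,j}. th l) \<le> (\<Sum>l=1..k. th l)"
      using that th_range by (intro sum_mono2) auto
    then show ?thesis using sum that by simp
  qed
  have mono: "th i \<le> th j" if "i \<in> {1..k}" "j \<in> {1..k}" "i \<le> j" for i j
  proof (rule ccontr)
    assume "\<not> th i \<le> th j"
    then have lt: "th j < th i" by simp
    have lb: "th j < b" and p: "0 < th i" using lt th_range[of i] th_range[of j] by auto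
    have "s' (th j) \<le> c j * G" by (rule th_ltb[OF lb])
    moreover have "c i * G \<le> s' (th i)" by (rule th_pos[OF p])
    moreover have "c j * G \<le> c i * G" using c_mono that Gpos by (intro mult_right_mono) auto
    moreover have "s' (th i) < s' (th j)" using sd[OF _ _ lt] th_range[of i] th_range[of j] b by auto
    ultimately show False by linarith
  qed
  have eqf: "(\<lambda>i. theta_h s' b c g i h) = th" by (simp add: th_def fun_eq_iff)
  show ?thesis unfolding eqf CAP_solution_def
  proof (intro conjI ballI impI)
    show "0 \<le> th i" for i using th_range[of i] by simp
    show "(\<Sum>i=1..k. th i) = b" by (rule sum)
    show "th i \<le> th j" if "i \<in> {1..k}" "j \<in> {1..k}" "i \<le> j" for i j using mono that .
  next
    fix i j assume ij: "i \<in> {1..k}" "j \<in> {1..k}" and h: "i < j \<and> th i \<le> th j \<and> 0 < th i"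
    have "th i + th j \<le> b" using two ij h by simp
    then have l1: "th i < b" and l2: "th j < b" and l3: "0 < th j" using h th_range[of i] th_range[of j] by auto
    have l4: "0 < th i" using h by simp
    have "s' (th j) = c j * G" using th_pos[OF l3] th_ltb[OF l2] by linarith
    moreover have "s' (th i) = c i * G" using th_pos[OF l4] th_ltb[OF l1] by linarith
    ultimately show "s' (th j) / s' (th i) = c j / c i" using Gpos by simp
  next
    fix i j assume ij: "i \<in> {1..k}" "j \<in> {1..k}" and h: "i < j \<and> th i < th j \<and> th i = 0"
    have ci: "0 < c i" "0 < c j" using c_pos ij by auto
    have p0: "0 < s' 0" using sb0 s00 by simp
    have "s' 0 \<le> c i * G" using th_ltb[of i] h b by simp
    moreover have "c j * G \<le> s' (th j)" using th_pos[of j] h by simp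
    ultimately have "c j * s' 0 \<le> c i * s' (th j)"
    proof -
      assume a1: "s' 0 \<le> c i * G" and a2: "c j * G \<le> s' (th j)"
      have "c j * s' 0 \<le> c j * (c i * G)" using a1 ci by (intro mult_left_mono) auto
      also have "\<dots> = c i * (c j * G)" by simp
      also have "\<dots> \<le> c i * s' (th j)" using a2 ci by (intro mult_left_mono) auto
      finally show ?thesis .
    qed
    then have "c j * s' 0 \<le> s' (th j) * c i" by (simp only: mult.commute)
    then have "c j \<le> s' (th j) * c i / s' 0" using p0 by (simp add: pos_le_divide_eq)
    then show "c j / c i \<le> s' (th j) / s' 0" using ci p0 by (simp add: pos_divide_le_eq)
  qed
qed

end
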